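(* Let $a_{\mathbf{K}}>c_{\mathbf{K}}>0$. For $a,R$ with $2a>a_{\mathbf{K}}-c_{\mathbf{K}}$ and $|2a_{\mathbf{K}}-2a|<R<2a+2c_{\mathbf{K}}$, define $x_0,r_0,\Delta,t_1,t_2$ by $$x_0=-\frac{(4(a-a_{\mathbf{K}})^2-R^2)c_{\mathbf{K}}}{2(a_{\mathbf{K}}^2-c_{\mathbf{K}}^2)},\quad r_0=\frac{4a_{\mathbf{K}}(a-a_{\mathbf{K}})^2-a_{\mathbf{K}}R^2}{2(a_{\mathbf{K}}^2-c_{\mathbf{K}}^2)}+2(a-a_{\mathbf{K}}),$$ $$\Delta=(x_0^2-r_0^2-R^2)^2-4r_0^2R^2,\quad t_{1,2}=\tfrac12\Big(1-\tfrac{x_0^2-r_0^2}{R^2}\Big)\mp\tfrac{1}{2R^2}\sqrt{\Delta},$$ and $e_1=\frac{t_1+t_2-2}{3}$, $e_2=\frac{t_1+1-2t_2}{3}$, $e_3=\frac{t_2+1-2t_1}{3}$, $g_2,g_3$ by $4\tilde t^3-g_2\tilde t-g_3=4(\tilde t-e_1)(\tilde t-e_2)(\tilde t-e_3)$. Let $$\xi=\int_{\frac{t_1+t_2+1}{3}}^{+\infty}\frac{d\tilde t}{\sqrt{4\tilde t^3-g_2\tilde t-g_3}},$$ and let $\omega_1=2\int_{e_3}^{+\infty}\frac{d\tilde t}{\sqrt{4\tilde t^3-g_2\tilde t-g_3}}$ if $\Delta>0$ and $\omega_1=2\int_{e_1}^{+\infty}\frac{d\tilde t}{\sqrt{4\tilde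 t^3-g_2\tilde t-g_3}}$ if $\Delta<0$ (the real period). Then for almost all admissible values of $a$, the frequency $\xi/\omega_1$, as a function of $R$ (on the admissible values of $R$ where it is defined), is non-constant.
   Context: This concerns the Kepler billiard with Kepler center $F=(-2c_{\mathbf{K}},0)$ and an elliptic reflection wall with foci $F$ and $F'=(0,0)$ and semi-major axis $a_{\mathbf{K}}$, at negative energy with orbital semi-major axis $a$ and foci-circle radius $R$; $\xi/\omega_1$ is the rotation number of the induced shift on the real part of the elliptic curve $\tilde y^2=4\tilde t^3-g_2\tilde t-g_3$ linearizing the dynamics. "Admissible" $a$ means $2a>a_{\mathbf{K}}-c_{\mathbf{K}}$. *)

theory Defs
  imports "HOL-Analysis.Analysis"
begin

text \<open>Kepler billiard: parameters aK > cK > 0 (ellipse), orbital semi-major axis a,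
  foci-circle radius R.\<close>

definition kb_x0 :: "real \<Rightarrow> real \<Rightarrow> real \<Rightarrow> real \<Rightarrow> real" where
  "kb_x0 aK cK a R = - ((4 * (a - aK)^2 - R^2) * cK) / (2 * (aK^2 - cK^2))"

definition kb_r0 :: "real \<Rightarrow> real \<Rightarrow> real \<Rightarrow> real \<Rightarrow> real" where
  "kb_r0 aK cK a R = (4 * aK * (a - aK)^2 - aK * R^2) / (2 * (aK^2 - cK^2)) + 2 * (a - aK)"

definition kb_Delta :: "real \<Rightarrow> real \<Rightarrow> real \<Rightarrow> real \<Rightarrow> real" where
  "kb_Delta aK cK a R =
     (let x0 = kb_x0 aK cK a R; r0 = kb_r0 aK cK a R
      in (x0^2 - r0^2 - R^2)^2 - 4 * r0^2 * R^2)"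

text \<open>t1, t2 as complex numbers (they are complex conjugate when Delta < 0);
  the square root of Delta is the principal complex square root.\<close>

definition kb_t1 :: "real \<Rightarrow> real \<Rightarrow> real \<Rightarrow> real \<Rightarrow> complex" where
  "kb_t1 aK cK a R =
     complex_of_real ((1 - ((kb_x0 aK cK a R)^2 - (kb_r0 aK cK a R)^2) / R^2) / 2)
     - csqrt (complex_of_real (kb_Delta aK cK a R)) / complex_of_real (2 * R^2)"

definition kb_t2 :: "real \<Rightarrow> real \<Rightarrow> real \<Rightarrow> real \<Rightarrow> complex" where
  "kb_t2 aK cK a R =
     complex_of_real ((1 - ((kb_x0 aK cK a R)^2 - (kb_r0 aK cK a R)^2) / R^2) / 2)
     + csqrt (complex_of_real (kb_Delta aK cK a R)) / complex_of_real (2 * R^2)"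

definition kb_e1 :: "real \<Rightarrow> real \<Rightarrow> real \<Rightarrow> real \<Rightarrow> complex" where
  "kb_e1 aK cK a R = (kb_t1 aK cK a R + kb_t2 aK cK a R - 2) / 3"

definition kb_e2 :: "real \<Rightarrow> real \<Rightarrow> real \<Rightarrow> real \<Rightarrow> complex" where
  "kb_e2 aK cK a R = (kb_t1 aK cK a R + 1 - 2 * kb_t2 aK cK a R) / 3"

definition kb_e3 :: "real \<Rightarrow> real \<Rightarrow> real \<Rightarrow> real \<Rightarrow> complex" where
  "kb_e3 aK cK a R = (kb_t2 aK cK a R + 1 - 2 * kb_t1 aK cK a R) / 3"

text \<open>g2, g3 from 4t^3 - g2 t - g3 = 4(t-e1)(t-e2)(t-e3) (using e1+e2+e3 = 0);
  they are real, we take real parts.\<close>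

definition kb_g2 :: "real \<Rightarrow> real \<Rightarrow> real \<Rightarrow> real \<Rightarrow> real" where
  "kb_g2 aK cK a R = Re (- 4 * (kb_e1 aK cK a R * kb_e2 aK cK a R
      + kb_e1 aK cK a R * kb_e3 aK cK a R + kb_e2 aK cK a R * kb_e3 aK cK a R))"

definition kb_g3 :: "real \<Rightarrow> real \<Rightarrow> real \<Rightarrow> real \<Rightarrow> real" where
  "kb_g3 aK cK a R = Re (4 * kb_e1 aK cK a R * kb_e2 aK cK a R * kb_e3 aK cK a R)"

definition kb_cubic :: "real \<Rightarrow> real \<Rightarrow> real \<Rightarrow> real \<Rightarrow> real \<Rightarrow> real" where
  "kb_cubic aK cK a R t = 4 * t^3 - kb_g2 aK cK a R * t - kb_g3 aK cK a R"

definition kb_int_from :: "real \<Rightarrow> real \<Rightarrow> real \<Rightarrow> real \<Rightarrow> real \<Rightarrow> real" where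
  "kb_int_from aK cK a R s =
     (LBINT t:{s..}. 1 / sqrt (kb_cubic aK cK a R t))"

definition kb_xi :: "real \<Rightarrow> real \<Rightarrow> real \<Rightarrow> real \<Rightarrow> real" where
  "kb_xi aK cK a R =
     kb_int_from aK cK a R (Re (kb_t1 aK cK a R + kb_t2 aK cK a R + 1) / 3)"

definition kb_omega1 :: "real \<Rightarrow> real \<Rightarrow> real \<Rightarrow> real \<Rightarrow> real" where
  "kb_omega1 aK cK a R =
     (if kb_Delta aK cK a R > 0 then 2 * kb_int_from aK cK a R (Re (kb_e3 aK cK a R))
      else 2 * kb_int_from aK cK a R (Re (kb_e1 aK cK a R)))"

definition kb_freq :: "real \<Rightarrow> real \<Rightarrow> real \<Rightarrow> real \<Rightarrow> real" where
  "kb_freq aK cK a R = kb_xi aK cK a R / kb_omega1 aK cK a R"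

definition kb_R_ok :: "real \<Rightarrow> real \<Rightarrow> real \<Rightarrow> real \<Rightarrow> bool" where
  "kb_R_ok aK cK a R \<longleftrightarrow>
     \<bar>2 * aK - 2 * a\<bar> < R \<and> R < 2 * a + 2 * cK \<and> kb_Delta aK cK a R \<noteq> 0"

end

theory Submission
  imports Defs
begin


lemma hk_to_lborel:
  fixes f :: "real \<Rightarrow> real"
  assumes "(f has_integral I) S" "\<And>x. x \<in> S \<Longrightarrow> 0 \<le> f x" "S \<in> sets borel"
    "f \<in> borel_measurable borel"
  shows "set_integrable lborel S f" "(LBINT x:S. f x) = I"
proof -
  have "f absolutely_integrable_on S"
    using assms(1,2) by (intro nonnegative_absolutely_integrable_1) (auto simp: has_integral_integrable)
  hence "integrable lebesgue (\<lambda>x. indicator S x *\<^sub>R f x)"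
    by (simp add: set_integrable_def)
  moreover have "(\<lambda>x. indicator S x *\<^sub>R f x) \<in> borel_measurable lborel"
    using assms(3,4) by measurable
  ultimately show si: "set_integrable lborel S f"
    unfolding set_integrable_def using integrable_completion by blast
  show "(LBINT x:S. f x) = I"
    using set_borel_integral_eq_integral(2)[OF si] assms(1) integral_unique by metis
qed

lemma lborel_reflect:
  fixes f :: "real \<Rightarrow> real"
  assumes "\<And>y. y \<in> B \<longleftrightarrow> s - y \<in> A"
  shows "(LBINT y:B. f (s - y)) = (LBINT x:A. f x)"
    "set_integrable lborel B (\<lambda>y. f (s - y)) \<longleftrightarrow> set_integrable lborel A f"
proof -
  have eq: "(\<lambda>y. indicator A (s + (-1) * y) *\<^sub>R f (s + (-1) * y)) = (\<lambda>y. indicator B y *\<^sub>R f (s - y))"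
    using assms by (auto simp: indicator_def fun_eq_iff)
  show "(LBINT y:B. f (s - y)) = (LBINT x:A. f x)"
    unfolding set_lebesgue_integral_def
    using lborel_integral_real_affine[of "-1" "\<lambda>x. indicator A x *\<^sub>R f x" s] eq by simp
  show "set_integrable lborel B (\<lambda>y. f (s - y)) \<longleftrightarrow> set_integrable lborel A f"
    unfolding set_integrable_def
    using lborel_integrable_real_affine_iff[of "-1" "\<lambda>x. indicator A x *\<^sub>R f x" s] eq by simp
qed

lemma powr32:
  fixes c :: real assumes "c < 1"
  shows "set_integrable lborel {..c} (\<lambda>t. (1 - t) powr (-3/2))"
    "(LBINT t:{..c}. (1 - t) powr (-3/2)) = 2 / sqrt (1 - c)"
proof -
  have h: "((\<lambda>x. x powr (-3/2)) has_integral 2 / sqrt (1 - c)) {1-c..}"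
  proof -
    have "((\<lambda>x. x powr (-3/2)) has_integral -((1-c) powr (-3/2+1)) / (-3/2+1)) {1-c..}"
      using assms by (intro has_integral_powr_to_inf) auto
    moreover have "-((1-c) powr (-3/2+1)) / (-3/2+1) = 2 / sqrt (1 - c)"
      using assms by (simp add: powr_minus_divide powr_half_sqrt)
    ultimately show ?thesis by simp
  qed
  have r: "\<And>y. y \<in> {..c} \<longleftrightarrow> 1 - y \<in> {1-c..}" by auto
  note L = hk_to_lborel[OF h]
  have i1: "set_integrable lborel {1-c..} (\<lambda>x. x powr (-3/2))" "(LBINT x:{1-c..}. x powr (-3/2)) = 2 / sqrt (1 - c)"
    by (rule L; auto)+
  show "set_integrable lborel {..c} (\<lambda>t. (1 - t) powr (-3/2))"
    using lborel_reflect(2)[OF r, of "\<lambda>x. x powr (-3/2)"] i1 by simp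
  show "(LBINT t:{..c}. (1 - t) powr (-3/2)) = 2 / sqrt (1 - c)"
    using lborel_reflect(1)[OF r, of "\<lambda>x. x powr (-3/2)"] i1 by simp
qed

lemma powr12:
  fixes m :: real assumes "m > 0"
  shows "set_integrable lborel {0..m} (\<lambda>t. (m - t) powr (-1/2))"
    "(LBINT t:{0..m}. (m - t) powr (-1/2)) = 2 * sqrt m"
proof -
  have h: "((\<lambda>x. x powr (-1/2)) has_integral 2 * sqrt m) {0..m}"
  proof -
    have "((\<lambda>x. x powr (-1/2)) has_integral (m powr (-1/2+1) / (-1/2+1))) {0..m}"
      using assms by (intro has_integral_powr_from_0) auto
    moreover have "m powr (-1/2+1) / (-1/2+1) = 2 * sqrt m"
      using assms by (simp add: powr_half_sqrt)
    ultimately show ?thesis by (simp add: mult.commute)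
  qed
  have r: "\<And>y. y \<in> {0..m} \<longleftrightarrow> m - y \<in> {0..m}" by auto
  note L = hk_to_lborel[OF h]
  have i1: "set_integrable lborel {0..m} (\<lambda>x. x powr (-1/2))" "(LBINT x:{0..m}. x powr (-1/2)) = 2 * sqrt m"
    by (rule L; auto)+
  show "set_integrable lborel {0..m} (\<lambda>t. (m - t) powr (-1/2))"
    using lborel_reflect(2)[OF r, of "\<lambda>x. x powr (-1/2)"] i1 by simp
  show "(LBINT t:{0..m}. (m - t) powr (-1/2)) = 2 * sqrt m"
    using lborel_reflect(1)[OF r, of "\<lambda>x. x powr (-1/2)"] i1 by simp
qed


lemma p32: "(x::real) > 0 \<Longrightarrow> x powr (-3/2) = 1 / (x * sqrt x)"
proof -
  assume x: "x > 0"
  have "x powr (3/2) = x powr (1 + 1/2)" by simp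
  also have "\<dots> = x powr 1 * x powr (1/2)" by (rule powr_add)
  also have "\<dots> = x * sqrt x" using x by (simp add: powr_half_sqrt)
  finally show ?thesis by (simp add: powr_minus_divide)
qed

lemma p12: "(x::real) > 0 \<Longrightarrow> x powr (-1/2) = 1 / sqrt x"
  by (simp add: powr_minus_divide powr_half_sqrt)

definition Hf :: "real \<Rightarrow> real \<Rightarrow> real \<Rightarrow> real" where
  "Hf S w t = 1 / sqrt (4 * (1 - t) * ((t - S/2)^2 - w))"

lemma Hf_meas[measurable]: "Hf S w \<in> borel_measurable borel"
  unfolding Hf_def by measurable

lemma subset_mono:
  fixes f :: "real \<Rightarrow> real"
  assumes "set_integrable lborel B f" "A \<subseteq> B" "A \<in> sets borel" "\<And>x. x \<in> B \<Longrightarrow> 0 \<le> f x"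
  shows "set_integrable lborel A f" "(LBINT x:A. f x) \<le> (LBINT x:B. f x)"
proof -
  show si: "set_integrable lborel A f" using set_integrable_subset[OF assms(1)] assms(2,3) by auto
  show "(LBINT x:A. f x) \<le> (LBINT x:B. f x)"
    unfolding set_lebesgue_integral_def
    apply (rule integral_mono)
    using si assms(1) apply (simp_all add: set_integrable_def)
    using assms(2,4) by (auto simp: indicator_def)
qed


lemma Hf_nonneg: "0 \<le> 4 * (1 - t) * ((t - S/2)^2 - w) \<Longrightarrow> 0 \<le> Hf S w t"
  unfolding Hf_def by simp

lemma const_int:
  fixes k :: real assumes "k \<ge> 0"
  shows "set_integrable lborel {-1..0::real} (\<lambda>x. k)" "(LBINT x:{-1..0::real}. k) = k"
proof -
  have h: "((\<lambda>x. k) has_integral k) {-1..0::real}"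
    using has_integral_const_real[of k "-1" 0] by simp
  show "set_integrable lborel {-1..0::real} (\<lambda>x. k)" "(LBINT x:{-1..0::real}. k) = k"
    using hk_to_lborel[OF h] assms by auto
qed

lemma xi_bound:
  fixes S w :: real
  assumes Q0: "\<And>t. t \<le> 0 \<Longrightarrow> (1-t)^2/4 \<le> (t - S/2)^2 - w"
  shows "set_integrable lborel {..0} (Hf S w)" "(LBINT t:{..0}. Hf S w t) \<le> 2"
    "0 < (LBINT t:{..0}. Hf S w t)" "\<And>t. t \<le> 0 \<Longrightarrow> 0 \<le> Hf S w t"
proof -
  have pos: "0 < (t - S/2)^2 - w" if "t \<le> 0" for t
  proof -
    have "0 < (1-t)^2/4" using that by simp
    then show ?thesis using Q0[OF that] by linarith
  qed
  show nn: "\<And>t. t \<le> 0 \<Longrightarrow> 0 \<le> Hf S w t"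
  proof -
    fix t :: real assume t: "t \<le> 0"
    show "0 \<le> Hf S w t"
      by (rule Hf_nonneg) (use pos[OF t] t in \<open>auto intro!: mult_nonneg_nonneg\<close>)
  qed
  have bd: "Hf S w t \<le> (1-t) powr (-3/2)" if t: "t \<le> 0" for t
  proof -
    define x where "x = 1 - t"
    have x: "x > 0" using t x_def by simp
    have "x^2 * x \<le> 4 * x * ((t - S/2)^2 - w)"
    proof -
      have "x^2 * x = 4 * x * ((1-t)^2/4)" unfolding x_def by (simp add: power2_eq_square)
      also have "\<dots> \<le> 4 * x * ((t - S/2)^2 - w)" using Q0[OF t] x by (intro mult_left_mono) auto
      finally show ?thesis .
    qed
    hence "sqrt (x^2 * x) \<le> sqrt (4 * x * ((t - S/2)^2 - w))" by (rule real_sqrt_le_mono)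
    moreover have "sqrt (x^2 * x) = x * sqrt x" using x by (simp add: real_sqrt_mult)
    ultimately have "x * sqrt x \<le> sqrt (4 * x * ((t - S/2)^2 - w))" by simp
    moreover have "0 < x * sqrt x" using x by simp
    ultimately have "1 / sqrt (4 * x * ((t - S/2)^2 - w)) \<le> 1 / (x * sqrt x)"
      using x pos[OF t] by (intro divide_left_mono) (auto intro!: mult_pos_pos)
    then show ?thesis unfolding Hf_def x_def[symmetric] p32[OF x] .
  qed
  have P1: "set_integrable lborel {..0::real} (\<lambda>t. (1 - t) powr (-3/2))" using powr32(1)[of 0] by simp
  have P2: "(LBINT t:{..0::real}. (1 - t) powr (-3/2)) = 2" using powr32(2)[of 0] by simp
  show si: "set_integrable lborel {..0} (Hf S w)"
    apply (rule set_integrable_bound[OF P1])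
     apply (simp add: set_borel_measurable_def)
    using bd nn by (auto intro!: AE_I2)
  have "(LBINT t:{..0}. Hf S w t) \<le> (LBINT t:{..0::real}. (1-t) powr (-3/2))"
    by (rule set_integral_mono[OF si P1]) (use bd in auto)
  then show "(LBINT t:{..0}. Hf S w t) \<le> 2" using P2 by simp
  define M where "M = (1 + \<bar>S\<bar>)^2 + \<bar>w\<bar>"
  have M: "M > 0" unfolding M_def by (simp add: add_pos_nonneg)
  define k where "k = 1 / sqrt (8 * M)"
  have k: "k > 0" using M k_def by simp
  have lb: "k \<le> Hf S w t" if t: "t \<in> {-1..0}" for t
  proof -
    have "\<bar>t - S/2\<bar> \<le> 1 + \<bar>S\<bar>" using t by auto
    hence "(t - S/2)^2 \<le> (1 + \<bar>S\<bar>)^2"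
      by (metis abs_ge_zero power2_abs power_mono)
    hence Q: "(t - S/2)^2 - w \<le> M" unfolding M_def by linarith
    have Qp: "0 < (t - S/2)^2 - w" using pos t by auto
    have "4 * (1 - t) * ((t - S/2)^2 - w) \<le> 8 * M"
    proof -
      have "4 * (1 - t) * ((t - S/2)^2 - w) \<le> 4 * 2 * ((t - S/2)^2 - w)"
        using t Qp by (intro mult_right_mono) auto
      also have "\<dots> \<le> 8 * M" using Q by simp
      finally show ?thesis .
    qed
    hence "sqrt (4 * (1 - t) * ((t - S/2)^2 - w)) \<le> sqrt (8 * M)" by (rule real_sqrt_le_mono)
    moreover have "0 < sqrt (4 * (1 - t) * ((t - S/2)^2 - w))" using t Qp by simp
    ultimately show ?thesis unfolding k_def Hf_def by (intro divide_left_mono) auto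
  qed
  note C = const_int[of k]
  have "k = (LBINT t:{-1..0::real}. k)" using C k by simp
  also have "\<dots> \<le> (LBINT t:{-1..0}. Hf S w t)"
    apply (rule set_integral_mono)
    using C k apply simp
    using subset_mono(1)[OF si, of "{-1..0}"] nn apply auto[1]
    using lb by auto
  also have "\<dots> \<le> (LBINT t:{..0}. Hf S w t)"
    by (rule subset_mono(2)[OF si]) (use nn in auto)
  finally show "0 < (LBINT t:{..0}. Hf S w t)" using k by linarith
qed


lemma om_integrable:
  assumes "set_integrable lborel {..0} (Hf S w)" "m > 0"
    "\<And>t. t \<in> {0..m} \<Longrightarrow> 0 \<le> Hf S w t \<and> Hf S w t \<le> K * (m - t) powr (-1/2)"
  shows "set_integrable lborel {..m} (Hf S w)"
proof -
  have i: "set_integrable lborel {0..m} (\<lambda>t. K * (m - t) powr (-1/2))"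
    using powr12(1)[OF assms(2)] by auto
  have "set_integrable lborel {0..m} (Hf S w)"
    apply (rule set_integrable_bound[OF i])
     apply (simp add: set_borel_measurable_def)
    apply (rule AE_I2)
    using assms(3) by fastforce
  from set_integrable_Un[OF assms(1) this] have "set_integrable lborel ({..0} \<union> {0..m}) (Hf S w)"
    by simp
  moreover have "{..0} \<union> {0..m} = {..m}" using assms(2) by auto
  ultimately show ?thesis by simp
qed

lemma om_lower:
  assumes "set_integrable lborel {..m} (Hf S w)" "\<And>t. t \<le> m \<Longrightarrow> 0 \<le> Hf S w t"
    "c \<le> m" "c < 1" "L \<ge> 0" "\<And>t. t < c \<Longrightarrow> L * (1-t) powr (-3/2) \<le> Hf S w t"
  shows "2 * L / sqrt (1 - c) \<le> (LBINT t:{..m}. Hf S w t)"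
proof -
  have "2 * L / sqrt (1 - c) = (LBINT t:{..c}. L * (1-t) powr (-3/2))"
    using powr32(2)[OF assms(4)] by simp
  also have "\<dots> \<le> (LBINT t:{..c}. Hf S w t)"
    apply (rule set_integral_mono_AE)
    using powr32(1)[OF assms(4)] apply simp
    using subset_mono(1)[OF assms(1), of "{..c}"] assms(2,3) apply auto[1]
    using AE_lborel_singleton[of c] apply eventually_elim
    using assms(6) by (auto simp: less_le)
  also have "\<dots> \<le> (LBINT t:{..m}. Hf S w t)"
    by (rule subset_mono(2)[OF assms(1)]) (use assms(2,3) in auto)
  finally show ?thesis .
qed


lemma caseB:
  fixes S w :: real
  assumes w: "w > 0" and t1h: "1/2 \<le> S/2 - sqrt w" and t2h: "S/2 + sqrt w < 1"
  shows "0 < (LBINT t:{..0}. Hf S w t) / (2 * (LBINT t:{..S/2 - sqrt w}. Hf S w t))"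
    "(LBINT t:{..0}. Hf S w t) / (2 * (LBINT t:{..S/2 - sqrt w}. Hf S w t))
       \<le> 2 * sqrt (\<bar>1 - S/2\<bar> + sqrt \<bar>w\<bar>)"
proof -
  define c where "c = sqrt w"
  define t1 where "t1 = S/2 - c"
  define t2 where "t2 = S/2 + c"
  have c: "c > 0" using w c_def by simp
  have t1: "1/2 \<le> t1" "t1 < t2" "t2 < 1" using t1h t2h c unfolding t1_def t2_def c_def by auto
  have Q: "(t - S/2)^2 - w = (t1 - t) * (t2 - t)" for t
  proof -
    have "w = c^2" using w c_def by simp
    thus ?thesis unfolding t1_def t2_def by (simp add: power2_eq_square algebra_simps)
  qed
  have Q0: "(1-t)^2/4 \<le> (t - S/2)^2 - w" if t: "t \<le> 0" for t
  proof -
    have a: "(1-t)/2 \<le> t1 - t" "(1-t)/2 \<le> t2 - t" "0 \<le> (1-t)/2" using t t1 by auto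
    have "(1-t)^2/4 = ((1-t)/2) * ((1-t)/2)" by (simp add: power2_eq_square)
    also have "\<dots> \<le> (t1 - t) * (t2 - t)" using a by (intro mult_mono) auto
    finally show ?thesis using Q by simp
  qed
  note X = xi_bound[OF Q0]
  define k0 where "k0 = 4 * (1 - t2) * (t2 - t1)"
  have k0: "k0 > 0" using t1 k0_def by simp
  have nn: "0 \<le> Hf S w t" if "t \<le> t1" for t
    by (rule Hf_nonneg) (use that t1 in \<open>auto simp: Q intro!: mult_nonneg_nonneg\<close>)
  have bd: "0 \<le> Hf S w t \<and> Hf S w t \<le> (1 / sqrt k0) * (t1 - t) powr (-1/2)" if t: "t \<in> {0..t1}" for t
  proof (cases "t = t1")
    case True
    then show ?thesis by (simp add: Hf_def Q)
  next
    case False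
    define x where "x = t1 - t"
    have x: "x > 0" using t False x_def by auto
    have "k0 * x \<le> 4 * (1 - t) * ((t - S/2)^2 - w)"
    proof -
      have "(1 - t2) * (t2 - t1) \<le> (1 - t) * (t2 - t)"
        using t t1 by (intro mult_mono) auto
      hence "4 * ((1 - t2) * (t2 - t1)) * x \<le> 4 * ((1 - t) * (t2 - t)) * x"
        using x by (intro mult_right_mono) auto
      thus ?thesis unfolding k0_def Q x_def by (simp add: algebra_simps)
    qed
    hence "sqrt (k0 * x) \<le> sqrt (4 * (1 - t) * ((t - S/2)^2 - w))" by (rule real_sqrt_le_mono)
    moreover have "sqrt (k0 * x) = sqrt k0 * sqrt x" by (simp add: real_sqrt_mult)
    moreover have "0 < sqrt k0 * sqrt x" using k0 x by simp
    ultimately have le: "sqrt k0 * sqrt x \<le> sqrt (4 * (1 - t) * ((t - S/2)^2 - w))"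
      and p: "0 < sqrt k0 * sqrt x" by auto
    have p2: "0 < sqrt (4 * (1 - t) * ((t - S/2)^2 - w))" using le p by linarith
    have "Hf S w t \<le> 1 / (sqrt k0 * sqrt x)"
      unfolding Hf_def using le p p2 by (intro divide_left_mono) auto
    also have "\<dots> = (1 / sqrt k0) * (t1 - t) powr (-1/2)"
      using p12[OF x] x_def by simp
    finally show ?thesis using nn t by auto
  qed
  have si: "set_integrable lborel {..t1} (Hf S w)"
    by (rule om_integrable[OF X(1), where K="1 / sqrt k0"]) (use t1 bd in auto)
  have lbp: "(1/2) * (1-t) powr (-3/2) \<le> Hf S w t" if t: "t < t1" for t
  proof -
    define x where "x = 1 - t"
    have x: "x > 0" using t t1 x_def by auto
    have Qp: "0 < (t - S/2)^2 - w" using t t1 by (simp add: Q)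
    have "(t - S/2)^2 - w \<le> x * x"
      unfolding Q x_def using t t1 by (intro mult_mono) auto
    hence "4 * x * ((t - S/2)^2 - w) \<le> 4 * x * (x * x)"
      using x by (intro mult_left_mono) auto
    hence "4 * (1 - t) * ((t - S/2)^2 - w) \<le> (2 * x)^2 * x"
      unfolding x_def by (simp add: power2_eq_square algebra_simps)
    hence l1: "sqrt (4 * (1 - t) * ((t - S/2)^2 - w)) \<le> sqrt ((2 * x)^2 * x)" by (rule real_sqrt_le_mono)
    have l2: "sqrt ((2 * x)^2 * x) = 2 * x * sqrt x" using x by (simp add: real_sqrt_mult)
    have l3: "0 < sqrt (4 * (1 - t) * ((t - S/2)^2 - w))" using Qp x x_def by simp
    have "1 / (2 * x * sqrt x) \<le> 1 / sqrt (4 * (1 - t) * ((t - S/2)^2 - w))"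
      apply (rule divide_left_mono)
      using l1 l2 apply metis
       apply simp
      using l3 x by (intro mult_pos_pos) auto
    hence "1 / (2 * x * sqrt x) \<le> Hf S w t" unfolding Hf_def .
    moreover have "(1/2) * (1-t) powr (-3/2) = 1 / (2 * x * sqrt x)"
      using p32[OF x] x_def by simp
    ultimately show ?thesis by simp
  qed
  have om: "2 * (1/2) / sqrt (1 - t1) \<le> (LBINT t:{..t1}. Hf S w t)"
    by (rule om_lower[OF si nn]) (use t1 lbp in auto)
  have s1: "0 < sqrt (1 - t1)" using t1 by simp
  have ompos: "0 < (LBINT t:{..t1}. Hf S w t)"
    using om s1 by (smt (verit) divide_pos_pos)
  show "0 < (LBINT t:{..0}. Hf S w t) / (2 * (LBINT t:{..S/2 - sqrt w}. Hf S w t))"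
    using X(3) ompos unfolding t1_def c_def by simp
  have "(LBINT t:{..0}. Hf S w t) / (2 * (LBINT t:{..t1}. Hf S w t)) \<le> 2 / (2 * (1 / sqrt (1 - t1)))"
    apply (rule frac_le)
    using X(2,3) om s1 by auto
  also have "\<dots> = sqrt (1 - t1)" using s1 by simp
  also have "\<dots> \<le> sqrt (\<bar>1 - S/2\<bar> + sqrt \<bar>w\<bar>)"
    using w unfolding t1_def c_def by (intro real_sqrt_le_mono) auto
  also have "\<dots> \<le> 2 * sqrt (\<bar>1 - S/2\<bar> + sqrt \<bar>w\<bar>)" by simp
  finally show "(LBINT t:{..0}. Hf S w t) / (2 * (LBINT t:{..S/2 - sqrt w}. Hf S w t))
       \<le> 2 * sqrt (\<bar>1 - S/2\<bar> + sqrt \<bar>w\<bar>)" unfolding t1_def c_def .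
qed


lemma caseA:
  fixes S w :: real
  assumes w: "w < 0" and S: "1 \<le> S"
  shows "0 < (LBINT t:{..0}. Hf S w t) / (2 * (LBINT t:{..1}. Hf S w t))"
    "(LBINT t:{..0}. Hf S w t) / (2 * (LBINT t:{..1}. Hf S w t))
       \<le> 2 * sqrt (\<bar>1 - S/2\<bar> + sqrt \<bar>w\<bar>)"
proof -
  define b where "b = sqrt (- w)"
  have b: "b > 0" "b^2 = - w" using w b_def by auto
  have Q0: "(1-t)^2/4 \<le> (t - S/2)^2 - w" if t: "t \<le> 0" for t
  proof -
    have a: "(1-t)/2 \<le> S/2 - t" "0 \<le> (1-t)/2" using t S by auto
    have "(1-t)^2/4 = ((1-t)/2)^2" by (simp add: power2_eq_square)
    also have "\<dots> \<le> (S/2 - t)^2" using a by (intro power_mono) auto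
    also have "\<dots> = (t - S/2)^2" by (simp add: power2_commute)
    finally show ?thesis using w by simp
  qed
  note X = xi_bound[OF Q0]
  have Qp: "0 < (t - S/2)^2 - w" for t using w by (smt (verit) zero_le_power2)
  have nn: "0 \<le> Hf S w t" if "t \<le> 1" for t
    by (rule Hf_nonneg) (use that Qp[of t] in \<open>auto intro!: mult_nonneg_nonneg\<close>)
  define k0 where "k0 = - 4 * w"
  have k0: "k0 > 0" using w k0_def by simp
  have bd: "0 \<le> Hf S w t \<and> Hf S w t \<le> (1 / sqrt k0) * (1 - t) powr (-1/2)" if t: "t \<in> {0..1}" for t
  proof (cases "t = 1")
    case True
    then show ?thesis by (simp add: Hf_def)
  next
    case False
    define x where "x = 1 - t"
    have x: "x > 0" using t False x_def by auto
    have "k0 * x \<le> 4 * (1 - t) * ((t - S/2)^2 - w)"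
    proof -
      have "4 * x * (- w) \<le> 4 * x * ((t - S/2)^2 - w)"
        using x by (intro mult_left_mono) auto
      thus ?thesis unfolding k0_def x_def by (simp add: algebra_simps)
    qed
    hence l1: "sqrt (k0 * x) \<le> sqrt (4 * (1 - t) * ((t - S/2)^2 - w))" by (rule real_sqrt_le_mono)
    have l2: "sqrt (k0 * x) = sqrt k0 * sqrt x" by (simp add: real_sqrt_mult)
    have p: "0 < sqrt k0 * sqrt x" using k0 x by simp
    have le: "sqrt k0 * sqrt x \<le> sqrt (4 * (1 - t) * ((t - S/2)^2 - w))" using l1 l2 by metis
    have p2: "0 < sqrt (4 * (1 - t) * ((t - S/2)^2 - w))" using le p by linarith
    have "Hf S w t \<le> 1 / (sqrt k0 * sqrt x)"
      unfolding Hf_def using le p p2 by (intro divide_left_mono) auto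
    also have "\<dots> = (1 / sqrt k0) * (1 - t) powr (-1/2)"
      using p12[OF x] x_def by simp
    finally show ?thesis using nn t by auto
  qed
  have si: "set_integrable lborel {..1} (Hf S w)"
    by (rule om_integrable[OF X(1), where K="1 / sqrt k0"]) (use bd in auto)
  define e where "e = \<bar>1 - S/2\<bar> + b"
  have e: "e > 0" using b e_def by simp
  have lbp: "(1/4) * (1-t) powr (-3/2) \<le> Hf S w t" if t: "t < 1 - e" for t
  proof -
    define x where "x = 1 - t"
    have x: "x > 0" "e \<le> x" using t e x_def by auto
    have "\<bar>t - S/2\<bar> \<le> x + \<bar>1 - S/2\<bar>" unfolding x_def using t e abs_triangle_ineq[of "t - 1" "1 - S/2"] by (simp add: abs_minus_commute)
    hence "(t - S/2)^2 \<le> (x + \<bar>1 - S/2\<bar>)^2"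
      by (metis abs_ge_zero power2_abs power_mono)
    hence "(t - S/2)^2 - w \<le> (x + \<bar>1 - S/2\<bar>)^2 + b^2" using b by simp
    also have "\<dots> \<le> (x + \<bar>1 - S/2\<bar> + b)^2"
      using b x by (simp add: power2_eq_square algebra_simps)
    also have "\<dots> \<le> (2 * x)^2"
      using x b unfolding e_def by (intro power_mono) auto
    finally have "(t - S/2)^2 - w \<le> (2 * x)^2" .
    hence "4 * x * ((t - S/2)^2 - w) \<le> 4 * x * (2 * x)^2"
      using x by (intro mult_left_mono) auto
    hence "4 * (1 - t) * ((t - S/2)^2 - w) \<le> (4 * x)^2 * x"
      unfolding x_def by (simp add: power2_eq_square algebra_simps)
    hence l1: "sqrt (4 * (1 - t) * ((t - S/2)^2 - w)) \<le> sqrt ((4 * x)^2 * x)" by (rule real_sqrt_le_mono)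
    have l2: "sqrt ((4 * x)^2 * x) = 4 * x * sqrt x" using x by (simp add: real_sqrt_mult)
    have l3: "0 < sqrt (4 * (1 - t) * ((t - S/2)^2 - w))" using Qp[of t] x x_def by simp
    have "1 / (4 * x * sqrt x) \<le> 1 / sqrt (4 * (1 - t) * ((t - S/2)^2 - w))"
      apply (rule divide_left_mono)
      using l1 l2 apply metis
       apply simp
      using l3 x by (intro mult_pos_pos) auto
    hence "1 / (4 * x * sqrt x) \<le> Hf S w t" unfolding Hf_def .
    moreover have "(1/4) * (1-t) powr (-3/2) = 1 / (4 * x * sqrt x)"
      using p32[OF x(1)] x_def by simp
    ultimately show ?thesis by simp
  qed
  have om: "2 * (1/4) / sqrt (1 - (1 - e)) \<le> (LBINT t:{..1}. Hf S w t)"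
    by (rule om_lower[OF si nn]) (use e lbp in auto)
  hence om': "1 / (2 * sqrt e) \<le> (LBINT t:{..1}. Hf S w t)" by simp
  have s1: "0 < sqrt e" using e by simp
  have ompos: "0 < (LBINT t:{..1}. Hf S w t)"
    using om' s1 by (smt (verit) divide_pos_pos)
  show "0 < (LBINT t:{..0}. Hf S w t) / (2 * (LBINT t:{..1}. Hf S w t))"
    using X(3) ompos by simp
  have "(LBINT t:{..0}. Hf S w t) / (2 * (LBINT t:{..1}. Hf S w t)) \<le> 2 / (2 * (1 / (2 * sqrt e)))"
    apply (rule frac_le)
    using X(2,3) om' s1 by auto
  also have "\<dots> = 2 * sqrt e" using s1 by simp
  also have "e = \<bar>1 - S/2\<bar> + sqrt \<bar>w\<bar>" unfolding e_def b_def using w by simp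
  finally show "(LBINT t:{..0}. Hf S w t) / (2 * (LBINT t:{..1}. Hf S w t))
       \<le> 2 * sqrt (\<bar>1 - S/2\<bar> + sqrt \<bar>w\<bar>)" .
qed



lemma g_vals:
  fixes hS w :: real and z t1 t2 :: complex
  assumes z2: "z^2 = of_real w" and t1: "t1 = of_real hS - z" and t2: "t2 = of_real hS + z"
  defines "p \<equiv> (1 - hS) / 3"
  shows "Re (- 4 * ((t1 + t2 - 2) / 3 * ((t1 + 1 - 2 * t2) / 3) + (t1 + t2 - 2) / 3 * ((t2 + 1 - 2 * t1) / 3)
            + (t1 + 1 - 2 * t2) / 3 * ((t2 + 1 - 2 * t1) / 3))) = 12 * p^2 + 4 * w"
    "Re (4 * ((t1 + t2 - 2) / 3) * ((t1 + 1 - 2 * t2) / 3) * ((t2 + 1 - 2 * t1) / 3)) = - 8 * p * (p^2 - w)"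
proof -
  have e1: "- 4 * ((t1 + t2 - 2) / 3 * ((t1 + 1 - 2 * t2) / 3) + (t1 + t2 - 2) / 3 * ((t2 + 1 - 2 * t1) / 3)
            + (t1 + 1 - 2 * t2) / 3 * ((t2 + 1 - 2 * t1) / 3)) = 12 * (of_real p)^2 + 4 * z^2"
    unfolding p_def t1 t2 by (simp add: field_simps power2_eq_square)
  show "Re (- 4 * ((t1 + t2 - 2) / 3 * ((t1 + 1 - 2 * t2) / 3) + (t1 + t2 - 2) / 3 * ((t2 + 1 - 2 * t1) / 3)
            + (t1 + 1 - 2 * t2) / 3 * ((t2 + 1 - 2 * t1) / 3))) = 12 * p^2 + 4 * w"
    unfolding e1 z2 by simp
  have e2: "4 * ((t1 + t2 - 2) / 3) * ((t1 + 1 - 2 * t2) / 3) * ((t2 + 1 - 2 * t1) / 3)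
      = - 8 * of_real p * ((of_real p)^2 - z^2)"
    unfolding p_def t1 t2 by (simp add: field_simps power2_eq_square)
  show "Re (4 * ((t1 + t2 - 2) / 3) * ((t1 + 1 - 2 * t2) / 3) * ((t2 + 1 - 2 * t1) / 3)) = - 8 * p * (p^2 - w)"
    unfolding e2 z2 by simp
qed

lemma cubic_link:
  fixes aK cK a R t :: real
  assumes R: "R \<noteq> 0"
    and S_def: "S = 1 - ((kb_x0 aK cK a R)^2 - (kb_r0 aK cK a R)^2) / R^2"
    and w_def: "w = kb_Delta aK cK a R / (4 * R^4)"
  shows "kb_cubic aK cK a R ((S+1)/3 - t) = 4 * (1 - t) * ((t - S/2)^2 - w)"
    "Re (kb_t1 aK cK a R + kb_t2 aK cK a R + 1) / 3 = (S+1)/3"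
    "Re (kb_e1 aK cK a R) = (S - 2) / 3"
    "kb_Delta aK cK a R > 0 \<Longrightarrow> Re (kb_e3 aK cK a R) = (2 - S) / 6 + sqrt w"
proof -
  define z where "z = csqrt (of_real (kb_Delta aK cK a R)) / of_real (2 * R^2)"
  have z2: "z^2 = of_real w"
  proof -
    have "z^2 = (csqrt (of_real (kb_Delta aK cK a R)))^2 / (of_real (2 * R^2))^2"
      unfolding z_def by (simp add: power_divide)
    also have "\<dots> = of_real (kb_Delta aK cK a R) / of_real ((2 * R^2)^2)"
      by (simp only: power2_csqrt of_real_power)
    also have "(2 * R^2)^2 = 4 * R^4" by (simp add: power_mult_distrib flip: power_mult)
    finally show ?thesis unfolding w_def by simp
  qed
  have t1: "kb_t1 aK cK a R = of_real (S/2) - z" unfolding kb_t1_def z_def S_def by simp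
  have t2: "kb_t2 aK cK a R = of_real (S/2) + z" unfolding kb_t2_def z_def S_def by simp
  note G = g_vals[OF z2 t1 t2]
  have g2: "kb_g2 aK cK a R = 12 * ((1 - S/2)/3)^2 + 4 * w"
    unfolding kb_g2_def kb_e1_def kb_e2_def kb_e3_def using G(1) by simp
  have g3: "kb_g3 aK cK a R = - 8 * ((1 - S/2)/3) * (((1 - S/2)/3)^2 - w)"
    unfolding kb_g3_def kb_e1_def kb_e2_def kb_e3_def using G(2) by simp
  show "kb_cubic aK cK a R ((S+1)/3 - t) = 4 * (1 - t) * ((t - S/2)^2 - w)"
    unfolding kb_cubic_def g2 g3 by (simp add: field_simps power2_eq_square power3_eq_cube)
  show "Re (kb_t1 aK cK a R + kb_t2 aK cK a R + 1) / 3 = (S+1)/3"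
    unfolding t1 t2 by simp
  show "Re (kb_e1 aK cK a R) = (S - 2) / 3"
    unfolding kb_e1_def t1 t2 by simp
  assume D: "kb_Delta aK cK a R > 0"
  have "Re z = sqrt w"
  proof -
    have "z = of_real (sqrt (kb_Delta aK cK a R) / (2 * R^2))"
      unfolding z_def using D by (simp add: csqrt_of_real)
    moreover have "sqrt w = sqrt (kb_Delta aK cK a R) / (2 * R^2)"
    proof -
      have "R^4 = (R^2)^2" by (simp flip: power_mult)
      moreover have "sqrt ((R^2)^2) = R^2" by (simp only: real_sqrt_abs) simp
      ultimately have "sqrt (R^4) = R^2" by metis
      thus ?thesis unfolding w_def using R by (simp add: real_sqrt_divide real_sqrt_mult)
    qed
    ultimately show ?thesis by simp
  qed
  then show "Re (kb_e3 aK cK a R) = (2 - S) / 6 + sqrt w"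
    unfolding kb_e3_def t1 t2 by simp
qed


lemma int_from_link:
  fixes aK cK a R :: real
  assumes R: "R \<noteq> 0"
    and S_def: "S = 1 - ((kb_x0 aK cK a R)^2 - (kb_r0 aK cK a R)^2) / R^2"
    and w_def: "w = kb_Delta aK cK a R / (4 * R^4)"
  shows "kb_int_from aK cK a R s' = (LBINT t:{..(S+1)/3 - s'}. Hf S w t)"
proof -
  have r: "\<And>y. y \<in> {..(S+1)/3 - s'} \<longleftrightarrow> (S+1)/3 - y \<in> {s'..}" by auto
  have eq: "(\<lambda>y. 1 / sqrt (kb_cubic aK cK a R ((S+1)/3 - y))) = Hf S w"
    unfolding Hf_def fun_eq_iff using cubic_link(1)[OF R S_def w_def] by simp
  show ?thesis
    unfolding kb_int_from_def
    using lborel_reflect(1)[OF r, of "\<lambda>x. 1 / sqrt (kb_cubic aK cK a R x)"] eq by simp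
qed

lemma freq_link:
  fixes aK cK a R :: real
  assumes R: "R \<noteq> 0"
    and S_def: "S = 1 - ((kb_x0 aK cK a R)^2 - (kb_r0 aK cK a R)^2) / R^2"
    and w_def: "w = kb_Delta aK cK a R / (4 * R^4)"
  shows "kb_freq aK cK a R = (LBINT t:{..0}. Hf S w t) /
     (if kb_Delta aK cK a R > 0 then 2 * (LBINT t:{..S/2 - sqrt w}. Hf S w t)
      else 2 * (LBINT t:{..1}. Hf S w t))"
proof -
  note L = int_from_link[OF R S_def w_def]
  note C = cubic_link[OF R S_def w_def]
  have xi: "kb_xi aK cK a R = (LBINT t:{..0}. Hf S w t)"
    unfolding kb_xi_def L C(2) by simp
  have om: "kb_omega1 aK cK a R = (if kb_Delta aK cK a R > 0 then 2 * (LBINT t:{..S/2 - sqrt w}. Hf S w t)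
      else 2 * (LBINT t:{..1}. Hf S w t))"
  proof (cases "kb_Delta aK cK a R > 0")
    case True
    have e: "(S+1)/3 - ((2 - S) / 6 + sqrt w) = S/2 - sqrt w" by (simp add: field_simps)
    show ?thesis unfolding kb_omega1_def L C(4)[OF True] e using True by simp
  next
    case False
    have e: "(S+1)/3 - (S - 2) / 3 = 1" by (simp add: field_simps)
    show ?thesis unfolding kb_omega1_def L C(3) e using False by simp
  qed
  show ?thesis unfolding kb_freq_def xi om ..
qed



lemma D_poly:
  fixes d k mm u :: real
  shows "((mm*u)^2 - (2*d - k*u)^2 - (4*d^2+u))^2 - 4*(2*d-k*u)^2*(4*d^2+u)
    = u^2 * (((1+4*d*k)^2 - 16*mm^2*d^2) + (2*(4*d*k-1)*(mm^2-k^2) - 4*k^2)*u + (mm^2-k^2)^2*u^2)"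
  by algebra

lemma L_poly:
  fixes d k mm u :: real
  shows "(u*(1+4*d*k+(mm^2-k^2)*u))^2 - u^2 * (((1+4*d*k)^2 - 16*mm^2*d^2) + (2*(4*d*k-1)*(mm^2-k^2) - 4*k^2)*u + (mm^2-k^2)^2*u^2)
     = 4*(mm*u)^2*(4*d^2+u)"
  by algebra

lemma T_poly:
  fixes d k mm u :: real
  shows "(4*d^2+u) + (mm*u)^2 - (2*d-k*u)^2 = u*(1+4*d*k+(mm^2-k^2)*u)"
  by algebra


lemma main_fixed_a:
  fixes aK cK a :: real
  assumes hK: "aK > cK" "cK > 0" and ha: "2*a > aK - cK" "a \<noteq> aK" "2*a \<noteq> aK + cK"
  shows "\<exists>R1 R2. kb_R_ok aK cK a R1 \<and> kb_R_ok aK cK a R2 \<and> kb_freq aK cK a R1 \<noteq> kb_freq aK cK a R2"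
proof -
  define d where "d = a - aK"
  define k where "k = aK / (2*(aK^2-cK^2))"
  define mm where "mm = cK / (2*(aK^2-cK^2))"
  define A where "A = (1+4*d*k)^2 - 16*mm^2*d^2"
  define B where "B = 2*(4*d*k-1)*(mm^2-k^2) - 4*k^2"
  define C where "C = (mm^2-k^2)^2"
  define Rf where "Rf u = sqrt (4*d^2+u)" for u
  define Sf where "Sf u = 1 - ((mm*u)^2 - (2*d-k*u)^2)/(4*d^2+u)" for u
  define Pf where "Pf u = A + B*u + C*u^2" for u
  define Lf where "Lf u = 1+4*d*k+(mm^2-k^2)*u" for u
  define wf where "wf u = u^2 * Pf u / (4*(4*d^2+u)^2)" for u
  define del where "del u = \<bar>1 - Sf u/2\<bar> + sqrt \<bar>wf u\<bar>" for u
  have den: "aK^2 - cK^2 > 0"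
    using hK by (simp add: power_strict_mono)
  have d0: "d \<noteq> 0" "d^2 > 0" using ha d_def by auto
  have mm0: "mm > 0" unfolding mm_def using den hK by simp
  define p1 where "p1 = 1 + 4*d*(k - mm)"
  define p2 where "p2 = 1 + 4*d*(k + mm)"
  have p1: "p1 = (2*a - aK + cK) / (aK + cK)"
  proof -
    have f: "aK^2 - cK^2 = (aK-cK)*(aK+cK)" by (simp add: power2_eq_square algebra_simps)
    have "k - mm = (aK - cK) / (2*((aK-cK)*(aK+cK)))"
      unfolding k_def mm_def f by (simp add: diff_divide_distrib)
    also have "\<dots> = 1 / (2*(aK + cK))" using hK by simp
    finally have "k - mm = 1 / (2*(aK + cK))" .
    hence "p1 = 1 + 4*d*(1 / (2*(aK + cK)))" unfolding p1_def by simp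
    thus ?thesis unfolding d_def using hK by (simp add: field_simps)
  qed
  have p2: "p2 = (2*a - aK - cK) / (aK - cK)"
  proof -
    have f: "aK^2 - cK^2 = (aK-cK)*(aK+cK)" by (simp add: power2_eq_square algebra_simps)
    have "k + mm = (aK + cK) / (2*((aK-cK)*(aK+cK)))"
      unfolding k_def mm_def f by (simp add: add_divide_distrib)
    also have "\<dots> = 1 / (2*(aK - cK))" using hK by simp
    finally have "k + mm = 1 / (2*(aK - cK))" .
    hence "p2 = 1 + 4*d*(1 / (2*(aK - cK)))" unfolding p2_def by simp
    thus ?thesis unfolding d_def using hK by (simp add: field_simps)
  qed
  have p1pos: "p1 > 0" unfolding p1 using hK ha by (intro divide_pos_pos) auto
  have p2nz: "p2 \<noteq> 0" unfolding p2 using hK ha by simp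
  have Ap: "A = p1 * p2" unfolding A_def p1_def p2_def by algebra
  have A0: "A \<noteq> 0" using Ap p1pos p2nz by simp
  have Lpos0: "A > 0 \<Longrightarrow> 1 + 4*d*k > 0"
  proof -
    assume "A > 0"
    hence "p2 > 0" using Ap p1pos by (simp add: zero_less_mult_iff)
    moreover have "1 + 4*d*k = (p1 + p2)/2" unfolding p1_def p2_def by (simp add: algebra_simps)
    ultimately show ?thesis using p1pos by simp
  qed
  have Rsq: "(Rf u)^2 = 4*d^2+u" if "u > 0" for u
    unfolding Rf_def using that d0 by simp
  have Rpos: "Rf u > 0" if "u > 0" for u
    unfolding Rf_def using that d0 by (simp add: add_pos_pos)
  have x0: "kb_x0 aK cK a (Rf u) = mm*u" if "u > 0" for u
    unfolding kb_x0_def Rsq[OF that] mm_def d_def using den by (simp add: field_simps)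
  have r0: "kb_r0 aK cK a (Rf u) = 2*d - k*u" if "u > 0" for u
    unfolding kb_r0_def Rsq[OF that] k_def d_def using den by (simp add: field_simps)
  have D: "kb_Delta aK cK a (Rf u) = u^2 * Pf u" if "u > 0" for u
    unfolding kb_Delta_def Let_def x0[OF that] r0[OF that] Rsq[OF that] Pf_def A_def B_def C_def
    using D_poly[of mm u d k] by simp
  have S: "1 - ((kb_x0 aK cK a (Rf u))^2 - (kb_r0 aK cK a (Rf u))^2) / (Rf u)^2 = Sf u" if "u > 0" for u
    unfolding x0[OF that] r0[OF that] Rsq[OF that] Sf_def ..
  have W: "kb_Delta aK cK a (Rf u) / (4 * (Rf u)^4) = wf u" if "u > 0" for u
  proof -
    have "(Rf u)^4 = ((Rf u)^2)^2" by (simp flip: power_mult)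
    thus ?thesis unfolding D[OF that] wf_def using Rsq[OF that] by simp
  qed
  have freq: "kb_freq aK cK a (Rf u) = (LBINT t:{..0}. Hf (Sf u) (wf u) t) /
     (if u^2 * Pf u > 0 then 2 * (LBINT t:{..Sf u/2 - sqrt (wf u)}. Hf (Sf u) (wf u) t)
      else 2 * (LBINT t:{..1}. Hf (Sf u) (wf u) t))" if u: "u > 0" for u
    using freq_link[OF _ S[OF u, symmetric] W[OF u, symmetric]] Rpos[OF u] D[OF u] by simp
  have ok: "kb_R_ok aK cK a (Rf u)" if u: "u > 0" "Rf u < 2*a + 2*cK" "Pf u \<noteq> 0" for u
  proof -
    have "\<bar>2 * aK - 2 * a\<bar> = sqrt (4*d^2)" unfolding d_def by (simp add: real_sqrt_mult) (auto simp: abs_if)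
    also have "\<dots> < Rf u" unfolding Rf_def using u by simp
    finally show ?thesis unfolding kb_R_ok_def using u D[OF u(1)] by simp
  qed
  have limS: "(Sf \<longlongrightarrow> 2) (at_right 0)"
  proof -
    have "((\<lambda>u. 1 - ((mm*u)^2 - (2*d-k*u)^2)/(4*d^2+u)) \<longlongrightarrow> 1 - ((mm*0)^2 - (2*d-k*0)^2)/(4*d^2+0)) (at_right 0)"
      by (intro tendsto_intros) (use d0 in auto)
    moreover have "1 - ((mm*0)^2 - (2*d-k*0)^2)/(4*d^2+0) = (2::real)" using d0 by (simp add: field_simps)
    ultimately show ?thesis unfolding Sf_def by simp
  qed
  have limP: "(Pf \<longlongrightarrow> A) (at_right 0)"
  proof -
    have "((\<lambda>u. A + B*u + C*u^2) \<longlongrightarrow> A + B*0 + C*0^2) (at_right 0)"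
      by (intro tendsto_intros)
    thus ?thesis unfolding Pf_def by simp
  qed
  have limW: "(wf \<longlongrightarrow> 0) (at_right 0)"
  proof -
    have "((\<lambda>u. u^2 * Pf u / (4*(4*d^2+u)^2)) \<longlongrightarrow> 0^2 * A / (4*(4*d^2+0)^2)) (at_right 0)"
      by (intro tendsto_intros limP) (use d0 in auto)
    thus ?thesis unfolding wf_def by simp
  qed
  have limL: "(Lf \<longlongrightarrow> 1+4*d*k) (at_right 0)"
  proof -
    have "((\<lambda>u. 1+4*d*k+(mm^2-k^2)*u) \<longlongrightarrow> 1+4*d*k+(mm^2-k^2)*0) (at_right 0)"
      by (intro tendsto_intros)
    thus ?thesis unfolding Lf_def by simp
  qed
  have limR: "(Rf \<longlongrightarrow> sqrt (4*d^2)) (at_right 0)"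
  proof -
    have "((\<lambda>u. sqrt (4*d^2+u)) \<longlongrightarrow> sqrt (4*d^2+0)) (at_right 0)"
      by (intro tendsto_intros)
    thus ?thesis unfolding Rf_def by simp
  qed
  have Rlt: "sqrt (4*d^2) < 2*a + 2*cK"
    unfolding d_def using hK ha by (simp add: real_sqrt_mult) (auto simp: abs_if)
  have limdel: "((\<lambda>u. 2 * sqrt (del u)) \<longlongrightarrow> 0) (at_right 0)"
  proof -
    have "((\<lambda>u. 2 * sqrt (\<bar>1 - Sf u/2\<bar> + sqrt \<bar>wf u\<bar>)) \<longlongrightarrow> 2 * sqrt (\<bar>1 - 2/2\<bar> + sqrt \<bar>0\<bar>)) (at_right 0)"
      by (intro tendsto_intros limS limW) auto
    thus ?thesis unfolding del_def by simp
  qed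
  have evu: "eventually (\<lambda>u. u > 0) (at_right (0::real))" by (rule eventually_at_right_less)
  have evR: "eventually (\<lambda>u. Rf u < 2*a + 2*cK) (at_right 0)"
    using order_tendstoD(2)[OF limR Rlt] .
  have evP: "eventually (\<lambda>u. kb_R_ok aK cK a (Rf u) \<and> 0 < kb_freq aK cK a (Rf u)
      \<and> kb_freq aK cK a (Rf u) \<le> 2 * sqrt (del u)) (at_right 0)"
  proof (cases "A > 0")
    case True
    have e1: "eventually (\<lambda>u. Pf u > 0) (at_right 0)" using order_tendstoD(1)[OF limP True] .
    have e2: "eventually (\<lambda>u. Lf u > 0) (at_right 0)" using order_tendstoD(1)[OF limL Lpos0[OF True]] .
    have limT1: "((\<lambda>u. Sf u/2 - sqrt (wf u)) \<longlongrightarrow> 2/2 - sqrt 0) (at_right 0)"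
      by (intro tendsto_intros limS limW) auto
    have e3: "eventually (\<lambda>u. 1/2 < Sf u/2 - sqrt (wf u)) (at_right 0)"
      using order_tendstoD(1)[OF limT1, of "1/2"] by simp
    show ?thesis using evu evR e1 e2 e3
    proof eventually_elim
      case (elim u)
      have u: "u > 0" using elim by simp
      have Tp: "4*d^2+u > 0" using u d0 by (simp add: add_pos_pos)
      have Dp: "u^2 * Pf u > 0" using elim by simp
      have wp: "wf u > 0" unfolding wf_def using Dp Tp by simp
      have oneS: "1 - Sf u/2 = u * Lf u / (2*(4*d^2+u))"
        unfolding Sf_def Lf_def using Tp T_poly[of d u mm k] by (simp add: field_simps)
      have oneSp: "1 - Sf u/2 > 0" unfolding oneS using elim Tp by simp
      have sq: "(1 - Sf u/2)^2 = (u * Lf u)^2 / (4*(4*d^2+u)^2)"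
        unfolding oneS by (simp add: power_divide power_mult_distrib) (simp add: power2_eq_square algebra_simps)
      have "(1 - Sf u/2)^2 - wf u = ((u * Lf u)^2 - u^2 * Pf u) / (4*(4*d^2+u)^2)"
        unfolding sq wf_def by (simp add: diff_divide_distrib)
      also have "(u * Lf u)^2 - u^2 * Pf u = 4*(mm*u)^2*(4*d^2+u)"
        unfolding Lf_def Pf_def A_def B_def C_def by (rule L_poly)
      finally have eqd: "(1 - Sf u/2)^2 - wf u = 4*(mm*u)^2*(4*d^2+u) / (4*(4*d^2+u)^2)" .
      have "0 < 4*(mm*u)^2*(4*d^2+u) / (4*(4*d^2+u)^2)"
        using mm0 u Tp by (intro divide_pos_pos mult_pos_pos) auto
      hence "wf u < (1 - Sf u/2)^2" using eqd by simp
      hence "sqrt (wf u) < sqrt ((1 - Sf u/2)^2)" by (rule real_sqrt_less_mono)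
      hence "sqrt (wf u) < 1 - Sf u/2" using oneSp by simp
      hence t2: "Sf u/2 + sqrt (wf u) < 1" by simp
      have t1: "1/2 \<le> Sf u/2 - sqrt (wf u)" using elim by simp
      note CB = caseB[OF wp t1 t2]
      have f: "kb_freq aK cK a (Rf u) = (LBINT t:{..0}. Hf (Sf u) (wf u) t) /
           (2 * (LBINT t:{..Sf u/2 - sqrt (wf u)}. Hf (Sf u) (wf u) t))"
        using freq[OF u] Dp by simp
      show ?case using ok[OF u] elim CB unfolding f del_def by auto
    qed
  next
    case False
    hence Aneg: "A < 0" using A0 by simp
    have e1: "eventually (\<lambda>u. Pf u < 0) (at_right 0)" using order_tendstoD(2)[OF limP Aneg] .
    have e3: "eventually (\<lambda>u. 1 < Sf u) (at_right 0)" using order_tendstoD(1)[OF limS, of 1] by simp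
    show ?thesis using evu evR e1 e3
    proof eventually_elim
      case (elim u)
      have u: "u > 0" using elim by simp
      have Tp: "4*d^2+u > 0" using u d0 by (simp add: add_pos_pos)
      have Dn: "u^2 * Pf u < 0" using elim u by (simp add: mult_pos_neg)
      have wn: "wf u < 0" unfolding wf_def using Dn Tp by (simp add: divide_neg_pos)
      note CA = caseA[OF wn less_imp_le[OF elim(4)]]
      have f: "kb_freq aK cK a (Rf u) = (LBINT t:{..0}. Hf (Sf u) (wf u) t) /
           (2 * (LBINT t:{..1}. Hf (Sf u) (wf u) t))"
        using freq[OF u] Dn by simp
      show ?case using ok[OF u] elim CA unfolding f del_def by auto
    qed
  qed
  obtain u1 where u1: "kb_R_ok aK cK a (Rf u1)" "0 < kb_freq aK cK a (Rf u1)"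
    using eventually_happens[OF evP] by auto
  define v where "v = kb_freq aK cK a (Rf u1)"
  have "eventually (\<lambda>u. 2 * sqrt (del u) < v) (at_right 0)"
    using order_tendstoD(2)[OF limdel] u1 v_def by simp
  with evP have "eventually (\<lambda>u. kb_R_ok aK cK a (Rf u) \<and> kb_freq aK cK a (Rf u) < v) (at_right 0)"
    by eventually_elim auto
  then obtain u2 where u2: "kb_R_ok aK cK a (Rf u2)" "kb_freq aK cK a (Rf u2) < v"
    using eventually_happens by force
  show ?thesis
    using u1 u2 v_def by (intro exI[of _ "Rf u1"] exI[of _ "Rf u2"]) auto
qed


theorem mainTheorem4:
  fixes aK cK :: real
  assumes "aK > cK" and "cK > 0"
  shows "AE a in lborel. 2 * a > aK - cK \<longrightarrow>
           (\<exists>R1 R2. kb_R_ok aK cK a R1 \<and> kb_R_ok aK cK a R2 \<and>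
                     kb_freq aK cK a R1 \<noteq> kb_freq aK cK a R2)"
proof -
  have "AE a in lborel. a \<noteq> aK" by (rule AE_lborel_singleton)
  moreover have "AE a in lborel. a \<noteq> (aK + cK) / 2" by (rule AE_lborel_singleton)
  ultimately show ?thesis
  proof eventually_elim
    case (elim a)
    then show ?case using main_fixed_a[OF assms, of a] by auto
  qed
qed

end
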